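(* Let $d\ge 8$ be an even integer and let $B$ be a bubble gadget that is properly attached to $S$ in a graph $G$. Then no two distinct vertices of $B$ are $d$-twins in the induced subgraph $G[V(B)\cup S]$.
   Context: Two distinct vertices $u,v$ of a graph $H$ are $d$-twins in $H$ if $|(N_H(u)\setminus N_H[v])\cup(N_H(v)\setminus N_H[u])|\le d$ (open/closed neighborhoods). The $a\times b$ rook graph has vertex set $\{(i,j): i\in[a], j\in[b]\}$, two distinct vertices being adjacent iff they agree in the first or in the second coordinate; view it as a grid with rows and columns. A bubble gadget $B$ (for $d$) is the $w\times w$ rook graph with $w=d/2+2$, minus the two rightmost vertices of its top row (so the top row has $d/2$ vertices and the rightmost column has $d/2+1$ vertices). If $B$ is an induced subgraph of a graph $G$ and $S$ is the set of vertices of $V(G)\setminus V(B)$ having a neighbor in $V(B)$, then $B$ is properly attached to $S$ in $G$ if every vertex of the top row and every vertex of the rightmost column of $B$ has one or two neighbors in $V(G)\setminus V(B)$, while every other vertex of $B$ has no neighbor outside $V(B)$. *)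

theory Defs
  imports Main
begin

definition simple_graph :: "'a set \<Rightarrow> ('a \<Rightarrow> 'a \<Rightarrow> bool) \<Rightarrow> bool" where
  "simple_graph V E \<longleftrightarrow> finite V \<and> (\<forall>u v. E u v \<longrightarrow> u \<in> V \<and> v \<in> V)
     \<and> (\<forall>u v. E u v \<longrightarrow> E v u) \<and> (\<forall>u. \<not> E u u)"

definition open_nbhd :: "'a set \<Rightarrow> ('a \<Rightarrow> 'a \<Rightarrow> bool) \<Rightarrow> 'a \<Rightarrow> 'a set" where
  "open_nbhd W E u = {x \<in> W. E u x}"

definition closed_nbhd :: "'a set \<Rightarrow> ('a \<Rightarrow> 'a \<Rightarrow> bool) \<Rightarrow> 'a \<Rightarrow> 'a set" where
  "closed_nbhd W E u = insert u (open_nbhd W E u)"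

definition d_twins :: "'a set \<Rightarrow> ('a \<Rightarrow> 'a \<Rightarrow> bool) \<Rightarrow> nat \<Rightarrow> 'a \<Rightarrow> 'a \<Rightarrow> bool" where
  "d_twins W E d u v \<longleftrightarrow> u \<in> W \<and> v \<in> W \<and> u \<noteq> v \<and>
     card ((open_nbhd W E u - closed_nbhd W E v) \<union> (open_nbhd W E v - closed_nbhd W E u)) \<le> d"

definition rook_adj :: "nat \<times> nat \<Rightarrow> nat \<times> nat \<Rightarrow> bool" where
  "rook_adj p q \<longleftrightarrow> p \<noteq> q \<and> (fst p = fst q \<or> snd p = snd q)"

text \<open>Width w = d/2 + 2 of the bubble gadget. Rows and columns are indexed by
  1..w; row 1 is the top row, column w the rightmost column.\<close>
definition bubble_width :: "nat \<Rightarrow> nat" where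
  "bubble_width d = d div 2 + 2"

definition bubble_verts :: "nat \<Rightarrow> (nat \<times> nat) set" where
  "bubble_verts d = {(i, j). 1 \<le> i \<and> i \<le> bubble_width d \<and> 1 \<le> j \<and> j \<le> bubble_width d
      \<and> \<not> (i = 1 \<and> j \<ge> bubble_width d - 1)}"

definition bubble_boundary :: "nat \<Rightarrow> (nat \<times> nat) set" where
  "bubble_boundary d = {p \<in> bubble_verts d. fst p = 1 \<or> snd p = bubble_width d}"

text \<open>f embeds the bubble gadget as an induced subgraph of G = (V, E);
  V(B) = f ` bubble_verts d.\<close>
definition induced_bubble :: "'a set \<Rightarrow> ('a \<Rightarrow> 'a \<Rightarrow> bool) \<Rightarrow> nat \<Rightarrow> (nat \<times> nat \<Rightarrow> 'a) \<Rightarrow> bool" where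
  "induced_bubble V E d f \<longleftrightarrow> inj_on f (bubble_verts d) \<and> f ` bubble_verts d \<subseteq> V \<and>
     (\<forall>p \<in> bubble_verts d. \<forall>q \<in> bubble_verts d. E (f p) (f q) \<longleftrightarrow> rook_adj p q)"

definition attach_set :: "'a set \<Rightarrow> ('a \<Rightarrow> 'a \<Rightarrow> bool) \<Rightarrow> 'a set \<Rightarrow> 'a set" where
  "attach_set V E VB = {x \<in> V - VB. \<exists>u \<in> VB. E x u}"

definition properly_attached :: "'a set \<Rightarrow> ('a \<Rightarrow> 'a \<Rightarrow> bool) \<Rightarrow> nat \<Rightarrow> (nat \<times> nat \<Rightarrow> 'a) \<Rightarrow> 'a set \<Rightarrow> bool" where
  "properly_attached V E d f S \<longleftrightarrow>
     induced_bubble V E d f \<and> S = attach_set V E (f ` bubble_verts d) \<and>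
     (\<forall>p \<in> bubble_verts d.
        let k = card {x \<in> V - f ` bubble_verts d. E (f p) x} in
        (if p \<in> bubble_boundary d then 1 \<le> k \<and> k \<le> 2 else k = 0))"

end

theory Submission
  imports Defs
begin

definition rowB :: "nat \<Rightarrow> nat \<Rightarrow> (nat \<times> nat) set" where
  "rowB d i = {r \<in> bubble_verts d. fst r = i}"
definition colB :: "nat \<Rightarrow> nat \<Rightarrow> (nat \<times> nat) set" where
  "colB d c = {r \<in> bubble_verts d. snd r = c}"
definition Dg :: "nat \<Rightarrow> nat \<times> nat \<Rightarrow> nat \<times> nat \<Rightarrow> (nat \<times> nat) set" where
  "Dg d p q = {r \<in> bubble_verts d. (rook_adj p r \<and> \<not> rook_adj q r \<and> r \<noteq> q)
                 \<or> (rook_adj q r \<and> \<not> rook_adj p r \<and> r \<noteq> p)}"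

lemma fin_B: "finite (bubble_verts d)"
proof -
  have "bubble_verts d \<subseteq> {1..bubble_width d} \<times> {1..bubble_width d}"
    by (auto simp: bubble_verts_def)
  then show ?thesis by (rule finite_subset) auto
qed

lemma fin_row: "finite (rowB d i)" using fin_B unfolding rowB_def by auto
lemma fin_col: "finite (colB d i)" using fin_B unfolding colB_def by auto
lemma fin_Dg: "finite (Dg d p q)" using fin_B unfolding Dg_def by auto

lemma row_ge_m: assumes "1 \<le> i" "i \<le> bubble_width d" shows "d div 2 \<le> card (rowB d i)"
proof -
  have "(\<lambda>k. (i,k)) ` {1..d div 2} \<subseteq> rowB d i"
    using assms by (auto simp: rowB_def bubble_verts_def bubble_width_def)
  then have "card ((\<lambda>k. (i,k)) ` {1..d div 2}) \<le> card (rowB d i)"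
    by (rule card_mono[OF fin_row])
  moreover have "card ((\<lambda>k. (i,k)) ` {1..d div 2}) = d div 2"
    by (subst card_image) (auto simp: inj_on_def)
  ultimately show ?thesis by simp
qed

lemma row_ge_w: assumes "2 \<le> i" "i \<le> bubble_width d" shows "bubble_width d \<le> card (rowB d i)"
proof -
  have "(\<lambda>k. (i,k)) ` {1..bubble_width d} \<subseteq> rowB d i"
    using assms by (auto simp: rowB_def bubble_verts_def)
  then have "card ((\<lambda>k. (i,k)) ` {1..bubble_width d}) \<le> card (rowB d i)"
    by (rule card_mono[OF fin_row])
  moreover have "card ((\<lambda>k. (i,k)) ` {1..bubble_width d}) = bubble_width d"
    by (subst card_image) (auto simp: inj_on_def)
  ultimately show ?thesis by simp
qed

lemma col_ge: assumes "1 \<le> c" "c \<le> bubble_width d" shows "bubble_width d - 1 \<le> card (colB d c)"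
proof -
  have "(\<lambda>k. (k,c)) ` {2..bubble_width d} \<subseteq> colB d c"
    using assms by (auto simp: colB_def bubble_verts_def)
  then have "card ((\<lambda>k. (k,c)) ` {2..bubble_width d}) \<le> card (colB d c)"
    by (rule card_mono[OF fin_col])
  moreover have "card ((\<lambda>k. (k,c)) ` {2..bubble_width d}) = bubble_width d - 1"
    by (subst card_image) (auto simp: inj_on_def)
  ultimately show ?thesis by simp
qed

lemma col_ge_w: assumes "1 \<le> c" "c + 2 \<le> bubble_width d" shows "bubble_width d \<le> card (colB d c)"
proof -
  have "(\<lambda>k. (k,c)) ` {1..bubble_width d} \<subseteq> colB d c"
    using assms by (auto simp: colB_def bubble_verts_def)
  then have "card ((\<lambda>k. (k,c)) ` {1..bubble_width d}) \<le> card (colB d c)"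
    by (rule card_mono[OF fin_col])
  moreover have "card ((\<lambda>k. (k,c)) ` {1..bubble_width d}) = bubble_width d"
    by (subst card_image) (auto simp: inj_on_def)
  ultimately show ?thesis by simp
qed

lemma card_minus2: "finite A \<Longrightarrow> card A - 2 \<le> card (A - {a,b})"
proof -
  assume "finite A"
  have "card A - card {a,b} \<le> card (A - {a,b})" by (rule diff_card_le_card_Diff) auto
  moreover have "card {a,b} \<le> 2" by (cases "a = b") auto
  ultimately show ?thesis by linarith
qed


lemma grid:
  assumes p: "p \<in> bubble_verts d" and q: "q \<in> bubble_verts d" and pq: "p \<noteq> q"
    and m: "4 \<le> d div 2"
  shows "2 * (d div 2) + 1 \<le> card (Dg d p q) \<or>
    (2 * (d div 2) \<le> card (Dg d p q) \<and>
      ((p \<in> bubble_boundary d \<and> q \<notin> bubble_boundary d) \<or> (q \<in> bubble_boundary d \<and> p \<notin> bubble_boundary d)))"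
proof -
  obtain i j where pij: "p = (i,j)" by (cases p)
  obtain i' j' where qij: "q = (i',j')" by (cases q)
  define w where "w = bubble_width d"
  have w: "w = d div 2 + 2" unfolding w_def bubble_width_def by simp
  have pr: "1 \<le> i" "i \<le> w" "1 \<le> j" "j \<le> w" "\<not> (i = 1 \<and> j \<ge> w - 1)"
    using p unfolding pij w_def bubble_verts_def by auto
  have qr: "1 \<le> i'" "i' \<le> w" "1 \<le> j'" "j' \<le> w" "\<not> (i' = 1 \<and> j' \<ge> w - 1)"
    using q unfolding qij w_def bubble_verts_def by auto
  have fD: "finite (Dg d p q)" by (rule fin_Dg)
  consider (row) "i = i'" | (col) "j = j'" | (diff) "i \<noteq> i'" "j \<noteq> j'" by blast
  then show ?thesis
  proof cases
    case row
    then have jj: "j \<noteq> j'" using pq pij qij by auto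
    have sub: "(colB d j - {p}) \<union> (colB d j' - {q}) \<subseteq> Dg d p q"
      using row jj unfolding Dg_def colB_def rook_adj_def pij qij by auto
    have disj: "(colB d j - {p}) \<inter> (colB d j' - {q}) = {}"
      using jj unfolding colB_def by auto
    have c1: "card (colB d j - {p}) = card (colB d j) - 1"
      using p pij by (simp add: colB_def)
    have c2: "card (colB d j' - {q}) = card (colB d j') - 1"
      using q qij by (simp add: colB_def)
    have "card ((colB d j - {p}) \<union> (colB d j' - {q})) \<le> card (Dg d p q)"
      by (rule card_mono[OF fD sub])
    then have main: "card (colB d j) - 1 + (card (colB d j') - 1) \<le> card (Dg d p q)"
      using c1 c2 disj by (simp add: card_Un_disjoint fin_col)
    have a1: "w - 1 \<le> card (colB d j)" using col_ge[of j d] pr unfolding w_def by simp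
    have a2: "w - 1 \<le> card (colB d j')" using col_ge[of j' d] qr unfolding w_def by simp
    show ?thesis
    proof (cases "j + 2 \<le> w \<or> j' + 2 \<le> w")
      case True
      then have "w \<le> card (colB d j) \<or> w \<le> card (colB d j')"
        using col_ge_w[of j d] col_ge_w[of j' d] pr qr unfolding w_def by auto
      then show ?thesis using main a1 a2 w by linarith
    next
      case False
      then have "(j = w \<and> j' = w - 1) \<or> (j = w - 1 \<and> j' = w)" using jj pr qr by linarith
      moreover have "i \<noteq> 1" using pr False by auto
      ultimately have "(p \<in> bubble_boundary d \<and> q \<notin> bubble_boundary d) \<or> (q \<in> bubble_boundary d \<and> p \<notin> bubble_boundary d)"
        using p q row w unfolding bubble_boundary_def pij qij w_def by auto
      then show ?thesis using main a1 a2 w by auto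
    qed
  next
    case col
    then have ii: "i \<noteq> i'" using pq pij qij by auto
    have sub: "(rowB d i - {p}) \<union> (rowB d i' - {q}) \<subseteq> Dg d p q"
      using col ii unfolding Dg_def rowB_def rook_adj_def pij qij by auto
    have disj: "(rowB d i - {p}) \<inter> (rowB d i' - {q}) = {}"
      using ii unfolding rowB_def by auto
    have c1: "card (rowB d i - {p}) = card (rowB d i) - 1"
      using p pij by (simp add: rowB_def)
    have c2: "card (rowB d i' - {q}) = card (rowB d i') - 1"
      using q qij by (simp add: rowB_def)
    have "card ((rowB d i - {p}) \<union> (rowB d i' - {q})) \<le> card (Dg d p q)"
      by (rule card_mono[OF fD sub])
    then have main: "card (rowB d i) - 1 + (card (rowB d i') - 1) \<le> card (Dg d p q)"
      using c1 c2 disj by (simp add: card_Un_disjoint fin_row)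
    have a1: "d div 2 \<le> card (rowB d i)" using row_ge_m[of i d] pr unfolding w_def by simp
    have a2: "d div 2 \<le> card (rowB d i')" using row_ge_m[of i' d] qr unfolding w_def by simp
    show ?thesis
    proof (cases "i \<noteq> 1 \<and> i' \<noteq> 1")
      case True
      then have "w \<le> card (rowB d i) \<and> w \<le> card (rowB d i')"
        using row_ge_w[of i d] row_ge_w[of i' d] pr qr unfolding w_def by auto
      then show ?thesis using main w by linarith
    next
      case False
      then have b: "(i = 1 \<and> i' \<noteq> 1) \<or> (i' = 1 \<and> i \<noteq> 1)" using ii by auto
      then have "j + 2 \<le> w" using pr qr col by auto
      then have "w \<le> card (rowB d i) \<or> w \<le> card (rowB d i')"
        using b row_ge_w[of i d] row_ge_w[of i' d] pr qr unfolding w_def by auto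
      moreover have "(p \<in> bubble_boundary d \<and> q \<notin> bubble_boundary d) \<or> (q \<in> bubble_boundary d \<and> p \<notin> bubble_boundary d)"
        using p q col b \<open>j + 2 \<le> w\<close> unfolding bubble_boundary_def pij qij w_def by auto
      ultimately show ?thesis using main a1 a2 w by auto
    qed
  next
    case diff
    define A1 where "A1 = rowB d i - {(i,j),(i,j')}"
    define A2 where "A2 = rowB d i' - {(i',j),(i',j')}"
    define A3 where "A3 = colB d j - {(i,j),(i',j)}"
    define A4 where "A4 = colB d j' - {(i,j'),(i',j')}"
    have sub: "A1 \<union> A2 \<union> A3 \<union> A4 \<subseteq> Dg d p q"
      using diff unfolding Dg_def rowB_def colB_def rook_adj_def pij qij A1_def A2_def A3_def A4_def by auto
    have f: "finite A1" "finite A2" "finite A3" "finite A4"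
      unfolding A1_def A2_def A3_def A4_def by (auto intro: fin_row fin_col)
    have d12: "A1 \<inter> A2 = {}" using diff unfolding A1_def A2_def rowB_def by auto
    have d123: "(A1 \<union> A2) \<inter> A3 = {}" unfolding A1_def A2_def A3_def rowB_def colB_def by auto
    have d1234: "(A1 \<union> A2 \<union> A3) \<inter> A4 = {}" using diff unfolding A1_def A2_def A3_def A4_def rowB_def colB_def by auto
    have cu: "card (A1 \<union> A2 \<union> A3 \<union> A4) = card A1 + card A2 + card A3 + card A4"
      using f d12 d123 d1234 by (simp add: card_Un_disjoint)
    have b1: "d div 2 - 2 \<le> card A1" unfolding A1_def
      using card_minus2[OF fin_row, of d i "(i,j)" "(i,j')"] row_ge_m[of i d] pr unfolding w_def by linarith
    have b2: "d div 2 - 2 \<le> card A2" unfolding A2_def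
      using card_minus2[OF fin_row, of d i' "(i',j)" "(i',j')"] row_ge_m[of i' d] qr unfolding w_def by linarith
    have b3: "w - 1 - 2 \<le> card A3" unfolding A3_def
      using card_minus2[OF fin_col, of d j "(i,j)" "(i',j)"] col_ge[of j d] pr unfolding w_def by linarith
    have b4: "w - 1 - 2 \<le> card A4" unfolding A4_def
      using card_minus2[OF fin_col, of d j' "(i,j')" "(i',j')"] col_ge[of j' d] qr unfolding w_def by linarith
    have "card (A1 \<union> A2 \<union> A3 \<union> A4) \<le> card (Dg d p q)" by (rule card_mono[OF fD sub])
    then show ?thesis using cu b1 b2 b3 b4 w m by linarith
  qed
qed


theorem mainTheorem10:
  fixes V :: "'a set" and E :: "'a \<Rightarrow> 'a \<Rightarrow> bool" and d :: nat
    and f :: "nat \<times> nat \<Rightarrow> 'a" and S :: "'a set"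
  assumes "simple_graph V E"
    and "even d" and "d \<ge> 8"
    and "properly_attached V E d f S"
  shows "\<forall>u \<in> f ` bubble_verts d. \<forall>v \<in> f ` bubble_verts d.
           \<not> d_twins (f ` bubble_verts d \<union> S) E d u v"
proof (intro ballI notI)
  fix u v assume u: "u \<in> f ` bubble_verts d" and v: "v \<in> f ` bubble_verts d"
    and tw: "d_twins (f ` bubble_verts d \<union> S) E d u v"
  define B where "B = bubble_verts d"
  define W where "W = f ` B \<union> S"
  define D where "D = (open_nbhd W E u - closed_nbhd W E v) \<union> (open_nbhd W E v - closed_nbhd W E u)"
  obtain p where p: "p \<in> B" "u = f p" using u B_def by auto
  obtain q where q: "q \<in> B" "v = f q" using v B_def by auto
  have sg: "finite V" "\<And>a b. E a b \<Longrightarrow> a \<in> V \<and> b \<in> V" "\<And>a b. E a b \<Longrightarrow> E b a" "\<And>a. \<not> E a a"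
    using assms(1) unfolding simple_graph_def by auto
  have ib: "inj_on f B" "f ` B \<subseteq> V" "\<And>a b. a \<in> B \<Longrightarrow> b \<in> B \<Longrightarrow> E (f a) (f b) \<longleftrightarrow> rook_adj a b"
    using assms(4) unfolding properly_attached_def induced_bubble_def B_def by auto
  have Sdef: "S = attach_set V E (f ` B)"
    using assms(4) unfolding properly_attached_def B_def by auto
  have ext: "\<And>r. r \<in> B \<Longrightarrow> (let k = card {x \<in> V - f ` B. E (f r) x} in
        (if r \<in> bubble_boundary d then 1 \<le> k \<and> k \<le> 2 else k = 0))"
    using assms(4) unfolding properly_attached_def B_def by auto
  have cardD: "card D \<le> d" using tw unfolding d_twins_def D_def W_def B_def by auto
  have uv: "u \<noteq> v" using tw unfolding d_twins_def by auto
  then have pq: "p \<noteq> q" using p q by auto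
  have SV: "S \<subseteq> V" using Sdef unfolding attach_set_def by auto
  have fD: "finite D"
  proof -
    have "D \<subseteq> V" using SV ib(2) unfolding D_def W_def open_nbhd_def by auto
    then show ?thesis using sg(1) finite_subset by blast
  qed
  have m: "4 \<le> d div 2" using assms(3) by simp
  have dd: "d = 2 * (d div 2)" using assms(2) by simp
  have sub: "f ` Dg d p q \<subseteq> D"
  proof
    fix y assume "y \<in> f ` Dg d p q"
    then obtain r where r: "r \<in> Dg d p q" "y = f r" by auto
    have rB: "r \<in> B" using r unfolding Dg_def B_def by auto
    have rW: "f r \<in> W" using rB unfolding W_def by auto
    have ne: "r \<noteq> q \<Longrightarrow> f r \<noteq> f q" "r \<noteq> p \<Longrightarrow> f r \<noteq> f p"
      using ib(1) rB p q unfolding inj_on_def by metis+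
    show "y \<in> D" using r(1) rW ne ib(3)[OF p(1) rB] ib(3)[OF q(1) rB]
      unfolding D_def Dg_def open_nbhd_def closed_nbhd_def r(2) p(2) q(2) by auto
  qed
  have cimg: "card (f ` Dg d p q) = card (Dg d p q)"
    by (rule card_image, rule inj_on_subset[OF ib(1)]) (auto simp: Dg_def B_def)
  have c1: "card (Dg d p q) \<le> card D" using card_mono[OF fD sub] cimg by simp
  have extra: "card (Dg d p q) < card D"
    if bd: "a \<in> B" "b \<in> B" "a \<in> bubble_boundary d" "b \<notin> bubble_boundary d"
       and ab: "(u = f a \<and> v = f b) \<or> (u = f b \<and> v = f a)" for a b
  proof -
    have k1: "1 \<le> card {x \<in> V - f ` B. E (f a) x}" using ext[OF bd(1)] bd(3) by (simp add: Let_def)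
    then obtain x where x: "x \<in> V - f ` B" "E (f a) x"
      by (metis (no_types, lifting) Collect_empty_eq card.empty not_one_le_zero)
    have k0: "card {x \<in> V - f ` B. E (f b) x} = 0" using ext[OF bd(2)] bd(4) by (simp add: Let_def)
    have "finite {x \<in> V - f ` B. E (f b) x}" using sg(1) by auto
    then have nb: "\<not> E (f b) x" using k0 x(1) by auto
    have xS: "x \<in> S" using x sg(3) bd(1) unfolding Sdef attach_set_def by blast
    have xne: "x \<noteq> f b" using x(1) bd(2) by auto
    have xD: "x \<in> D" using ab xS x nb xne unfolding D_def W_def open_nbhd_def closed_nbhd_def by auto
    have xn: "x \<notin> f ` Dg d p q" using x(1) unfolding Dg_def B_def by auto
    have "insert x (f ` Dg d p q) \<subseteq> D" using xD sub by auto
    then have "card (insert x (f ` Dg d p q)) \<le> card D" by (rule card_mono[OF fD])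
    then show ?thesis using xn cimg fin_Dg by (simp add: card_insert_if)
  qed
  from grid[OF p(1)[unfolded B_def] q(1)[unfolded B_def] pq m]
  show False
  proof
    assume "2 * (d div 2) + 1 \<le> card (Dg d p q)"
    then show False using c1 cardD dd by linarith
  next
    assume h: "2 * (d div 2) \<le> card (Dg d p q) \<and>
      ((p \<in> bubble_boundary d \<and> q \<notin> bubble_boundary d) \<or> (q \<in> bubble_boundary d \<and> p \<notin> bubble_boundary d))"
    then have "card (Dg d p q) < card D"
      using extra[of p q] extra[of q p] p q by auto
    then show False using h cardD dd by linarith
  qed
qed

end
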